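(* For $n\ge1$ let $T_n:=\frac1n\sum_{k=1}^n d_n(k)^2$. Then $T_n\to3$ almost surely and in $L^1$ as $n\to\infty$.
   Context: Let $(u_j)_{j\ge1}$ be independent random variables with $u_j$ uniform on $\{1,\dots,j\}$. For $n\ge k\ge1$ let $d_n(k):=\#\{j\in\{k,\dots,n-1\}:u_j=k\}$; i.e. $d_n(k)$ is the out-degree of vertex $k$ in the random recursive tree on $\{1,\dots,n\}$ where vertex $j+1$ attaches to vertex $u_j$. *)

theory Defs
  imports "HOL-Probability.Probability"
begin

text \<open>Out-degree of vertex k in the random recursive tree on {1,...,n}, given the
  attachment sequence u: d_n(k) = #{j in {k,...,n-1} : u j = k}.\<close>
definition outdeg :: "(nat \<Rightarrow> nat) \<Rightarrow> nat \<Rightarrow> nat \<Rightarrow> nat" where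
  "outdeg u n k = card {j \<in> {k..<n}. u j = k}"

definition Tstat :: "(nat \<Rightarrow> nat) \<Rightarrow> nat \<Rightarrow> real" where
  "Tstat u n = (1 / real n) * (\<Sum>k = 1..n. (real (outdeg u n k))\<^sup>2)"

end

theory Submission
  imports Defs "HOL-Library.Discrete_Functions" "HOL-Real_Asymp.Real_Asymp" "HOL-Analysis.Harmonic_Numbers"
begin



definition Ssum :: "(nat \<Rightarrow> nat) \<Rightarrow> nat \<Rightarrow> real" where
  "Ssum u n = (\<Sum>k = 1..n. (real (outdeg u n k))\<^sup>2)"

definition good :: "(nat \<Rightarrow> nat) \<Rightarrow> bool" where
  "good u \<longleftrightarrow> (\<forall>j\<ge>1. u j \<in> {1..j})"

lemma outdeg_Suc: "outdeg u (Suc n) k = outdeg u n k + (if k \<le> n \<and> u n = k then 1 else 0)"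
proof -
  have "{j \<in> {k..<Suc n}. u j = k} = {j \<in> {k..<n}. u j = k} \<union> (if k \<le> n \<and> u n = k then {n} else {})"
    by (auto simp: less_Suc_eq)
  then show ?thesis unfolding outdeg_def by (auto simp: card_insert_if)
qed

lemma outdeg_self: "outdeg u n n = 0"
  unfolding outdeg_def by simp

lemma outdeg_le: "outdeg u n k \<le> n"
proof -
  have "outdeg u n k \<le> card {k..<n}" unfolding outdeg_def by (rule card_mono) auto
  then show ?thesis by simp
qed

lemma Ssum_Suc:
  assumes "u n \<in> {1..n}"
  shows "Ssum u (Suc n) = Ssum u n + 2 * real (outdeg u n (u n)) + 1"
proof -
  have "Ssum u (Suc n) = (\<Sum>k = 1..n. (real (outdeg u (Suc n) k))\<^sup>2)"
    unfolding Ssum_def by (simp add: outdeg_self)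
  also have "\<dots> = (\<Sum>k = 1..n. (real (outdeg u n k))\<^sup>2 + (if u n = k then 2 * real (outdeg u n k) + 1 else 0))"
    by (intro sum.cong) (auto simp: outdeg_Suc power2_eq_square algebra_simps)
  also have "\<dots> = Ssum u n + 2 * real (outdeg u n (u n)) + 1"
    unfolding Ssum_def sum.distrib using assms by (simp add: sum.delta')
  finally show ?thesis .
qed

lemma sum_outdeg:
  assumes "good u" "n \<ge> 1"
  shows "(\<Sum>k = 1..n. real (outdeg u n k)) = real n - 1"
  using assms(2)
proof (induction n rule: dec_induct)
  case base
  then show ?case by (simp add: outdeg_self)
next
  case (step n)
  have un: "u n \<in> {1..n}" using assms(1) step.hyps unfolding good_def by auto
  have "(\<Sum>k = 1..Suc n. real (outdeg u (Suc n) k)) = (\<Sum>k = 1..n. real (outdeg u (Suc n) k))"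
    by (simp add: outdeg_self)
  also have "\<dots> = (\<Sum>k = 1..n. real (outdeg u n k) + (if u n = k then 1 else 0))"
    by (intro sum.cong) (auto simp: outdeg_Suc)
  also have "\<dots> = real n - 1 + 1"
    unfolding sum.distrib step.IH using un by (simp add: sum.delta')
  finally show ?case by simp
qed

lemma Ssum_0: "Ssum u 0 = 0" and Ssum_1: "Ssum u (Suc 0) = 0"
  unfolding Ssum_def by (simp_all add: outdeg_self)

lemma Ssum_nonneg: "Ssum u n \<ge> 0"
  unfolding Ssum_def by (simp add: sum_nonneg)

lemma Ssum_mono_Suc: "good u \<Longrightarrow> Ssum u n \<le> Ssum u (Suc n)"
proof (cases "n = 0")
  case True then show ?thesis by (simp add: Ssum_0 Ssum_nonneg)
next
  case False
  assume "good u"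
  then have "u n \<in> {1..n}" using False unfolding good_def by auto
  then show ?thesis by (simp add: Ssum_Suc)
qed

lemma Tstat_Ssum: "Tstat u n = Ssum u n / real n"
  unfolding Tstat_def Ssum_def by simp

definition Yv :: "(nat \<Rightarrow> nat) \<Rightarrow> nat \<Rightarrow> real" where
  "Yv u m = (if 1 \<le> u m then real (outdeg u m (u m)) else 0)"

definition Zs :: "(nat \<Rightarrow> nat) \<Rightarrow> nat \<Rightarrow> real" where
  "Zs u n = (\<Sum>m\<in>{1..<n}. Yv u m - (real m - 1) / real m)"

definition aseq :: "nat \<Rightarrow> real" where
  "aseq n = (\<Sum>m\<in>{1..<n}. 2 * ((real m - 1) / real m) + 1)"

lemma Ssum_decomp:
  assumes "good u"
  shows "Ssum u n = aseq n + 2 * Zs u n"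
proof (cases "n = 0")
  case True then show ?thesis by (simp add: Ssum_0 aseq_def Zs_def)
next
  case False
  then have "n \<ge> 1" by simp
  then show ?thesis
  proof (induction n rule: dec_induct)
    case base then show ?case by (simp add: Ssum_1 aseq_def Zs_def)
  next
    case (step n)
    have "u n \<in> {1..n}" using assms step.hyps unfolding good_def by auto
    then show ?case using step.hyps
      by (simp add: Ssum_Suc step.IH aseq_def Zs_def Yv_def algebra_simps)
  qed
qed




definition dep :: "((nat \<Rightarrow> nat) \<Rightarrow> 'b) \<Rightarrow> nat set \<Rightarrow> bool" where
  "dep h J \<longleftrightarrow> (\<forall>u. h u = h (restrict u J))"

lemma sets_PiM_count_all:
  assumes "finite (I :: nat set)" "A \<subseteq> space (PiM I (\<lambda>_. count_space (UNIV :: nat set)))"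
  shows "A \<in> sets (PiM I (\<lambda>_. count_space (UNIV :: nat set)))"
proof -
  let ?P = "PiM I (\<lambda>_. count_space (UNIV :: nat set))"
  have sp: "space ?P = PiE I (\<lambda>_. UNIV)" by (simp add: space_PiM)
  have cA: "countable A"
    using assms by (intro countable_subset[OF _ countable_PiE[of I "\<lambda>_. UNIV :: nat set"]]) (auto simp: sp)
  have eq: "A = (\<Union>x\<in>A. PiE I (\<lambda>i. {x i}))"
  proof
    show "A \<subseteq> (\<Union>x\<in>A. PiE I (\<lambda>i. {x i}))"
      using assms(2) by (auto simp: sp PiE_iff)
    show "(\<Union>x\<in>A. PiE I (\<lambda>i. {x i})) \<subseteq> A"
    proof
      fix y assume "y \<in> (\<Union>x\<in>A. PiE I (\<lambda>i. {x i}))"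
      then obtain x where x: "x \<in> A" "y \<in> PiE I (\<lambda>i. {x i})" by auto
      have "x \<in> PiE I (\<lambda>_. UNIV)" using x(1) assms(2) by (auto simp: sp)
      then have "y = x" using x(2) by (auto simp: PiE_iff extensional_def fun_eq_iff)
      then show "y \<in> A" using x by simp
    qed
  qed
  have "(\<Union>x\<in>A. PiE I (\<lambda>i. {x i})) \<in> sets ?P"
    by (intro sets.countable_UN'[OF cA]) (auto intro!: sets_PiM_I_finite assms(1))
  then show ?thesis using eq by simp
qed

lemma measurable_PiM_count_all:
  assumes "finite (I :: nat set)"
  shows "(f :: (nat \<Rightarrow> nat) \<Rightarrow> real) \<in> borel_measurable (PiM I (\<lambda>_. count_space (UNIV :: nat set)))"
  by (rule measurableI) (auto intro!: sets_PiM_count_all assms)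

locale rrt = prob_space M for M :: "'a measure" +
  fixes U :: "nat \<Rightarrow> 'a \<Rightarrow> nat"
  assumes indep: "indep_vars (\<lambda>_. count_space UNIV) U {1..}"
    and distrU: "\<And>j. j \<ge> 1 \<Longrightarrow> distr M (count_space UNIV) (U j) = measure_pmf (pmf_of_set {1..j})"
begin

lemma meas_U: "j \<ge> 1 \<Longrightarrow> U j \<in> measurable M (count_space UNIV)"
  using indep unfolding indep_vars_def by auto

lemma rv_dep:
  assumes "finite J" "J \<subseteq> {1..}" "dep h J"
  shows "(\<lambda>\<omega>. h (\<lambda>i. U i \<omega>) :: real) \<in> borel_measurable M"
proof -
  have "(\<lambda>\<omega>. h (\<lambda>i. U i \<omega>)) = (\<lambda>\<omega>. h (restrict (\<lambda>i. U i \<omega>) J))"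
    using assms(3) unfolding dep_def by metis
  also have "\<dots> \<in> borel_measurable M"
    by (rule measurable_compose[OF measurable_restrict measurable_PiM_count_all])
       (use assms meas_U in auto)
  finally show ?thesis .
qed

lemma int_dep:
  assumes "finite J" "J \<subseteq> {1..}" "dep h J" "\<And>u. \<bar>h u\<bar> \<le> B"
  shows "integrable M (\<lambda>\<omega>. h (\<lambda>i. U i \<omega>) :: real)"
  by (rule finite_measure.integrable_const_bound[where B=B])
     (use assms rv_dep in \<open>auto simp: finite_measure_axioms\<close>)

lemma prob_U_eq:
  assumes "j \<ge> 1" "k \<in> {1..j}"
  shows "prob {\<omega> \<in> space M. U j \<omega> = k} = 1 / real j"
proof -
  have "prob {\<omega> \<in> space M. U j \<omega> = k} = measure (distr M (count_space UNIV) (U j)) {k}"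
    by (subst measure_distr) (use meas_U assms in \<open>auto intro!: arg_cong[where f=prob]\<close>)
  also have "\<dots> = 1 / real j"
    using assms by (simp add: distrU measure_pmf_single pmf_of_set)
  finally show ?thesis .
qed

lemma split_U:
  assumes j: "j \<ge> 1" "k \<in> {1..j}" and h: "dep h {1..<j}" "\<And>u. \<bar>h u\<bar> \<le> B"
  shows "(\<integral>\<omega>. h (\<lambda>i. U i \<omega>) * (if U j \<omega> = k then 1 else 0) \<partial>M) = (\<integral>\<omega>. h (\<lambda>i. U i \<omega>) \<partial>M) / real j"
proof -
  let ?X1 = "\<lambda>\<omega>. h (restrict (\<lambda>i. U i \<omega>) {1..<j})"
  let ?X2 = "\<lambda>\<omega>. (\<lambda>x. if x j = k then 1 else 0 :: real) (restrict (\<lambda>i. U i \<omega>) {j})"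
  have ind: "indep_var borel ?X1 borel ?X2"
    using indep_var_compose[OF indep_var_restrict[OF indep, of "{1..<j}" "{j}"]
        measurable_PiM_count_all[of "{1..<j}" h]
        measurable_PiM_count_all[of "{j}" "\<lambda>x. if x j = k then 1 else 0"]] j
    by (simp add: comp_def subset_eq)
  have e1: "?X1 = (\<lambda>\<omega>. h (\<lambda>i. U i \<omega>))" using h(1) unfolding dep_def by metis
  have e2: "?X2 = (\<lambda>\<omega>. if U j \<omega> = k then 1 else 0)" by auto
  have i1: "integrable M (\<lambda>\<omega>. h (\<lambda>i. U i \<omega>))"
    by (rule int_dep[OF _ _ h]) auto
  have d2: "dep (\<lambda>u. if u j = k then 1 else 0 :: real) {j}" unfolding dep_def by auto
  have i2: "integrable M (\<lambda>\<omega>. if U j \<omega> = k then 1 else 0 :: real)"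
    using int_dep[OF _ _ d2, of 1] j by auto
  have "(\<integral>\<omega>. h (\<lambda>i. U i \<omega>) * (if U j \<omega> = k then 1 else 0) \<partial>M)
      = (\<integral>\<omega>. h (\<lambda>i. U i \<omega>) \<partial>M) * (\<integral>\<omega>. (if U j \<omega> = k then 1 else 0) \<partial>M)"
    using indep_var_lebesgue_integral[OF ind[unfolded e1 e2] i1 i2] by simp
  also have "(\<integral>\<omega>. (if U j \<omega> = k then 1 else 0 :: real) \<partial>M) = prob {\<omega> \<in> space M. U j \<omega> = k}"
  proof -
    have "(\<integral>\<omega>. (if U j \<omega> = k then 1 else 0 :: real) \<partial>M) = (\<integral>\<omega>. indicator {\<omega> \<in> space M. U j \<omega> = k} \<omega> \<partial>M)"
      by (rule Bochner_Integration.integral_cong) (auto simp: indicator_def)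
    moreover have "{\<omega> \<in> space M. U j \<omega> = k} \<in> events"
      using meas_U[OF j(1)] by measurable
    ultimately show ?thesis by simp
  qed
  finally show ?thesis using prob_U_eq[OF j] by simp
qed

end



definition bnd :: "((nat \<Rightarrow> nat) \<Rightarrow> real) \<Rightarrow> bool" where
  "bnd h \<longleftrightarrow> (\<exists>B. \<forall>u. \<bar>h u\<bar> \<le> B)"

definition nice :: "((nat \<Rightarrow> nat) \<Rightarrow> real) \<Rightarrow> nat \<Rightarrow> bool" where
  "nice h N \<longleftrightarrow> dep h {1..<N} \<and> bnd h"

lemma dep_mono: "dep h J \<Longrightarrow> J \<subseteq> J' \<Longrightarrow> dep h J'"
  unfolding dep_def
proof safe
  fix u assume "\<forall>u. h u = h (restrict u J)" "J \<subseteq> J'"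
  then have "h (restrict u J') = h (restrict (restrict u J') J)" by blast
  also have "restrict (restrict u J') J = restrict u J" using \<open>J \<subseteq> J'\<close> by (auto simp: restrict_def fun_eq_iff subset_iff)
  finally show "h u = h (restrict u J')" using \<open>\<forall>u. h u = h (restrict u J)\<close> by metis
qed

lemma nice_mono: "nice h N \<Longrightarrow> N \<le> N' \<Longrightarrow> nice h N'"
  unfolding nice_def using dep_mono[of h "{1..<N}" "{1..<N'}"] by auto

lemma nice_const: "nice (\<lambda>u. c) N"
  unfolding nice_def dep_def bnd_def by auto

lemma nice_add: "nice f N \<Longrightarrow> nice g N \<Longrightarrow> nice (\<lambda>u. f u + g u) N"
  unfolding nice_def dep_def bnd_def
proof (elim conjE exE, intro conjI allI exI)
  fix B1 B2 u assume "\<forall>u. \<bar>f u\<bar> \<le> B1" "\<forall>u. \<bar>g u\<bar> \<le> B2"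
  then have a: "\<bar>f u\<bar> \<le> B1" and b: "\<bar>g u\<bar> \<le> B2" by auto
  show "\<bar>f u + g u\<bar> \<le> B1 + B2" using abs_triangle_ineq[of "f u" "g u"] a b by linarith
qed metis

lemma nice_diff: "nice f N \<Longrightarrow> nice g N \<Longrightarrow> nice (\<lambda>u. f u - g u) N"
  unfolding nice_def dep_def bnd_def
proof (elim conjE exE, intro conjI allI exI)
  fix B1 B2 u assume "\<forall>u. \<bar>f u\<bar> \<le> B1" "\<forall>u. \<bar>g u\<bar> \<le> B2"
  then have a: "\<bar>f u\<bar> \<le> B1" and b: "\<bar>g u\<bar> \<le> B2" by auto
  show "\<bar>f u - g u\<bar> \<le> B1 + B2" using abs_triangle_ineq4[of "f u" "g u"] a b by linarith
qed metis

lemma nice_mult: "nice f N \<Longrightarrow> nice g N \<Longrightarrow> nice (\<lambda>u. f u * g u) N"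
  unfolding nice_def dep_def bnd_def
proof (elim conjE exE, intro conjI allI exI)
  fix B1 B2 u assume "\<forall>u. \<bar>f u\<bar> \<le> B1" "\<forall>u. \<bar>g u\<bar> \<le> B2"
  then show "\<bar>f u * g u\<bar> \<le> B1 * B2"
    by (simp add: abs_mult mult_mono')
qed metis

lemma nice_power2: "nice f N \<Longrightarrow> nice (\<lambda>u. (f u)\<^sup>2) N"
  using nice_mult[of f N f] by (simp add: power2_eq_square)

lemma nice_sum: "(\<And>m. m \<in> S \<Longrightarrow> nice (f m) N) \<Longrightarrow> nice (\<lambda>u. \<Sum>m\<in>S. f m u) N"
proof (induction S rule: infinite_finite_induct)
  case (infinite A) then show ?case by (simp add: nice_const)
next
  case empty then show ?case by (simp add: nice_const)
next
  case (insert x F)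
  then show ?case by (simp add: nice_add)
qed

lemma nice_outdeg: "k \<ge> 1 \<Longrightarrow> nice (\<lambda>u. real (outdeg u n k)) n"
  unfolding nice_def dep_def bnd_def
proof (intro conjI allI exI)
  fix u assume "k \<ge> 1"
  then have "{j \<in> {k..<n}. u j = k} = {j \<in> {k..<n}. restrict u {1..<n} j = k}" by auto
  then show "real (outdeg u n k) = real (outdeg (restrict u {1..<n}) n k)"
    unfolding outdeg_def by simp
next
  fix u show "\<bar>real (outdeg u n k)\<bar> \<le> real n" using outdeg_le[of u n k] by simp
qed

lemma nice_Ssum: "nice (\<lambda>u. Ssum u n) n"
  unfolding Ssum_def by (intro nice_sum nice_power2 nice_outdeg) auto

lemma nice_Yv: "m \<ge> 1 \<Longrightarrow> nice (\<lambda>u. Yv u m) (Suc m)"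
  unfolding nice_def dep_def bnd_def
proof (intro conjI allI exI)
  fix u assume m: "m \<ge> 1"
  show "Yv u m = Yv (restrict u {1..<Suc m}) m"
  proof (cases "1 \<le> u m")
    case True
    then have "{j \<in> {u m..<m}. u j = u m} = {j \<in> {restrict u {1..<Suc m} m..<m}. restrict u {1..<Suc m} j = restrict u {1..<Suc m} m}"
      using m by auto
    then show ?thesis using True m unfolding Yv_def outdeg_def by simp
  next
    case False
    then show ?thesis using m unfolding Yv_def by simp
  qed
next
  fix u show "\<bar>Yv u m\<bar> \<le> real m" using outdeg_le[of u m "u m"] by (simp add: Yv_def)
qed

lemma nice_Zs: "nice (\<lambda>u. Zs u n) n"
  unfolding Zs_def
proof (intro nice_sum nice_diff nice_const)
  fix m assume "m \<in> {1..<n}"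
  then show "nice (\<lambda>u. Yv u m) n"
    using nice_mono[OF nice_Yv[of m]] by auto
qed

context rrt begin

lemma int_nice: "nice h N \<Longrightarrow> integrable M (\<lambda>\<omega>. h (\<lambda>i. U i \<omega>))"
  unfolding nice_def bnd_def by (auto intro: int_dep)

lemma split_nice:
  assumes "j \<ge> 1" "k \<in> {1..j}" "nice h j"
  shows "(\<integral>\<omega>. h (\<lambda>i. U i \<omega>) * (if U j \<omega> = k then 1 else 0) \<partial>M) = (\<integral>\<omega>. h (\<lambda>i. U i \<omega>) \<partial>M) / real j"
  using assms unfolding nice_def bnd_def by (auto intro: split_U)

end

locale rrt_good = rrt +
  assumes goodU: "\<And>\<omega>. good (\<lambda>j. U j \<omega>)"
begin

lemma U_range: "j \<ge> 1 \<Longrightarrow> U j \<omega> \<in> {1..j}"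
  using goodU unfolding good_def by auto

lemma integral_at_U:
  assumes m: "m \<ge> 1" and g: "\<And>k. k \<in> {1..m} \<Longrightarrow> nice (g k) m"
  shows "(\<integral>\<omega>. g (U m \<omega>) (\<lambda>i. U i \<omega>) \<partial>M) = (\<Sum>k=1..m. (\<integral>\<omega>. g k (\<lambda>i. U i \<omega>) \<partial>M)) / real m"
proof -
  have "(\<integral>\<omega>. g (U m \<omega>) (\<lambda>i. U i \<omega>) \<partial>M) = (\<integral>\<omega>. (\<Sum>k=1..m. g k (\<lambda>i. U i \<omega>) * (if U m \<omega> = k then 1 else 0)) \<partial>M)"
  proof (rule Bochner_Integration.integral_cong)
    fix \<omega> show "g (U m \<omega>) (\<lambda>i. U i \<omega>) = (\<Sum>k=1..m. g k (\<lambda>i. U i \<omega>) * (if U m \<omega> = k then 1 else 0))"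
      using U_range[OF m, of \<omega>] by (simp add: if_distrib sum.delta' cong: if_cong)
  qed simp
  also have "\<dots> = (\<Sum>k=1..m. (\<integral>\<omega>. g k (\<lambda>i. U i \<omega>) * (if U m \<omega> = k then 1 else 0) \<partial>M))"
  proof (rule Bochner_Integration.integral_sum)
    fix k assume "k \<in> {1..m}"
    have "nice (\<lambda>u. g k u * (if u m = k then 1 else 0)) (Suc m)"
    proof (intro nice_mult)
      show "nice (g k) (Suc m)" using nice_mono[OF g[OF \<open>k \<in> {1..m}\<close>]] by auto
      show "nice (\<lambda>u. if u m = k then 1 else 0) (Suc m)"
        unfolding nice_def dep_def bnd_def using m by (auto intro!: exI[of _ 1])
    qed
    from int_nice[OF this] show "integrable M (\<lambda>\<omega>. g k (\<lambda>i. U i \<omega>) * (if U m \<omega> = k then 1 else 0))" by simp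
  qed
  also have "\<dots> = (\<Sum>k=1..m. (\<integral>\<omega>. g k (\<lambda>i. U i \<omega>) \<partial>M) / real m)"
    by (intro sum.cong refl split_nice m g)
  finally show ?thesis by (simp add: sum_divide_distrib)
qed

end



lemma aseq_le: "aseq n \<le> 3 * real n"
proof -
  have "aseq n \<le> (\<Sum>m\<in>{1..<n}. 3)"
    unfolding aseq_def by (intro sum_mono) (auto simp: field_simps)
  also have "\<dots> \<le> 3 * real n" by simp
  finally show ?thesis .
qed

lemma aseq_nonneg: "aseq n \<ge> 0"
  unfolding aseq_def by (intro sum_nonneg) (auto simp: field_simps)

context rrt_good begin

lemma E_hY:
  assumes m: "m \<ge> 1" and h: "nice h m"
  shows "(\<integral>\<omega>. h (\<lambda>i. U i \<omega>) * Yv (\<lambda>i. U i \<omega>) m \<partial>M) = ((real m - 1) / real m) * (\<integral>\<omega>. h (\<lambda>i. U i \<omega>) \<partial>M)"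
proof -
  have "(\<integral>\<omega>. h (\<lambda>i. U i \<omega>) * Yv (\<lambda>i. U i \<omega>) m \<partial>M)
      = (\<integral>\<omega>. (\<lambda>k u. h u * real (outdeg u m k)) (U m \<omega>) (\<lambda>i. U i \<omega>) \<partial>M)"
    by (rule Bochner_Integration.integral_cong) (use U_range[OF m] in \<open>auto simp: Yv_def\<close>)
  also have "\<dots> = (\<Sum>k=1..m. (\<integral>\<omega>. h (\<lambda>i. U i \<omega>) * real (outdeg (\<lambda>i. U i \<omega>) m k) \<partial>M)) / real m"
    by (rule integral_at_U[OF m]) (auto intro!: nice_mult h nice_outdeg)
  also have "(\<Sum>k=1..m. (\<integral>\<omega>. h (\<lambda>i. U i \<omega>) * real (outdeg (\<lambda>i. U i \<omega>) m k) \<partial>M))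
      = (\<integral>\<omega>. (\<Sum>k=1..m. h (\<lambda>i. U i \<omega>) * real (outdeg (\<lambda>i. U i \<omega>) m k)) \<partial>M)"
    by (rule Bochner_Integration.integral_sum[symmetric])
       (rule int_nice[of "\<lambda>u. h u * real (outdeg u m _)" m], auto intro!: nice_mult h nice_outdeg)
  also have "\<dots> = (\<integral>\<omega>. h (\<lambda>i. U i \<omega>) * (real m - 1) \<partial>M)"
    by (rule Bochner_Integration.integral_cong)
       (use sum_outdeg[OF goodU m] in \<open>auto simp: sum_distrib_left[symmetric]\<close>)
  finally show ?thesis by simp
qed

lemma E_Y: "m \<ge> 1 \<Longrightarrow> (\<integral>\<omega>. Yv (\<lambda>i. U i \<omega>) m \<partial>M) = (real m - 1) / real m"
  using E_hY[of m "\<lambda>_. 1"] by (simp add: nice_const prob_space)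

lemma E_Y2:
  assumes m: "m \<ge> 1"
  shows "(\<integral>\<omega>. (Yv (\<lambda>i. U i \<omega>) m)\<^sup>2 \<partial>M) = (\<integral>\<omega>. Ssum (\<lambda>i. U i \<omega>) m \<partial>M) / real m"
proof -
  have "(\<integral>\<omega>. (Yv (\<lambda>i. U i \<omega>) m)\<^sup>2 \<partial>M)
      = (\<integral>\<omega>. (\<lambda>k u. (real (outdeg u m k))\<^sup>2) (U m \<omega>) (\<lambda>i. U i \<omega>) \<partial>M)"
    by (rule Bochner_Integration.integral_cong) (use U_range[OF m] in \<open>auto simp: Yv_def\<close>)
  also have "\<dots> = (\<Sum>k=1..m. (\<integral>\<omega>. (real (outdeg (\<lambda>i. U i \<omega>) m k))\<^sup>2 \<partial>M)) / real m"
    by (rule integral_at_U[OF m]) (auto intro!: nice_power2 nice_outdeg)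
  also have "(\<Sum>k=1..m. (\<integral>\<omega>. (real (outdeg (\<lambda>i. U i \<omega>) m k))\<^sup>2 \<partial>M))
      = (\<integral>\<omega>. Ssum (\<lambda>i. U i \<omega>) m \<partial>M)"
    unfolding Ssum_def
    by (rule Bochner_Integration.integral_sum[symmetric])
       (rule int_nice[of "\<lambda>u. (real (outdeg u m _))\<^sup>2" m], auto intro!: nice_power2 nice_outdeg)
  finally show ?thesis .
qed

lemma E_Z: "(\<integral>\<omega>. Zs (\<lambda>i. U i \<omega>) n \<partial>M) = 0"
proof -
  have "(\<integral>\<omega>. Zs (\<lambda>i. U i \<omega>) n \<partial>M) = (\<Sum>m\<in>{1..<n}. (\<integral>\<omega>. Yv (\<lambda>i. U i \<omega>) m - (real m - 1) / real m \<partial>M))"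
    unfolding Zs_def
    by (rule Bochner_Integration.integral_sum)
       (rule int_nice[of "\<lambda>u. Yv u _ - (real _ - 1) / real _" "Suc _"], auto intro!: nice_diff nice_Yv nice_const)
  also have "\<dots> = 0"
  proof (intro sum.neutral ballI)
    fix m assume "m \<in> {1..<n}"
    then have m: "m \<ge> 1" by auto
    have "(\<integral>\<omega>. Yv (\<lambda>i. U i \<omega>) m - (real m - 1) / real m \<partial>M) = (\<integral>\<omega>. Yv (\<lambda>i. U i \<omega>) m \<partial>M) - (real m - 1) / real m"
      using int_nice[OF nice_Yv[OF m]] by (simp add: prob_space)
    then show "(\<integral>\<omega>. Yv (\<lambda>i. U i \<omega>) m - (real m - 1) / real m \<partial>M) = 0"
      using E_Y[OF m] by simp
  qed
  finally show ?thesis .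
qed

lemma E_S: "(\<integral>\<omega>. Ssum (\<lambda>i. U i \<omega>) n \<partial>M) = aseq n"
proof -
  have "(\<integral>\<omega>. Ssum (\<lambda>i. U i \<omega>) n \<partial>M) = (\<integral>\<omega>. aseq n + 2 * Zs (\<lambda>i. U i \<omega>) n \<partial>M)"
    by (rule Bochner_Integration.integral_cong) (auto simp: Ssum_decomp[OF goodU])
  also have "\<dots> = aseq n"
    using int_nice[OF nice_Zs[of n]] E_Z[of n] by (simp add: prob_space)
  finally show ?thesis .
qed

lemma E_Z2: "(\<integral>\<omega>. (Zs (\<lambda>i. U i \<omega>) n)\<^sup>2 \<partial>M) \<le> 3 * real n"
proof (induction n)
  case 0 then show ?case by (simp add: Zs_def)
next
  case (Suc n)
  show ?case
  proof (cases "n = 0")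
    case True then show ?thesis by (simp add: Zs_def)
  next
    case False
    then have n: "n \<ge> 1" by simp
    define c where "c = (real n - 1) / real n"
    let ?Z = "\<lambda>\<omega>. Zs (\<lambda>i. U i \<omega>) n"
    let ?Y = "\<lambda>\<omega>. Yv (\<lambda>i. U i \<omega>) n"
    have iZ2: "integrable M (\<lambda>\<omega>. (?Z \<omega>)\<^sup>2)" by (rule int_nice[OF nice_power2[OF nice_Zs]])
    have iZ: "integrable M ?Z" by (rule int_nice[OF nice_Zs])
    have iY: "integrable M ?Y" by (rule int_nice[OF nice_Yv[OF n]])
    have iY2: "integrable M (\<lambda>\<omega>. (?Y \<omega>)\<^sup>2)" by (rule int_nice[OF nice_power2[OF nice_Yv[OF n]]])
    have iZY: "integrable M (\<lambda>\<omega>. ?Z \<omega> * ?Y \<omega>)" 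
      by (rule int_nice[OF nice_mult[OF nice_mono[OF nice_Zs] nice_Yv[OF n]]]) simp
    have ZY: "(\<integral>\<omega>. ?Z \<omega> * ?Y \<omega> \<partial>M) = c * (\<integral>\<omega>. ?Z \<omega> \<partial>M)"
      unfolding c_def by (rule E_hY[OF n nice_Zs])
    have EY: "(\<integral>\<omega>. ?Y \<omega> \<partial>M) = c" unfolding c_def by (rule E_Y[OF n])
    have EY2: "(\<integral>\<omega>. (?Y \<omega>)\<^sup>2 \<partial>M) \<le> 3"
    proof -
      have "real n * (\<integral>\<omega>. (?Y \<omega>)\<^sup>2 \<partial>M) \<le> real n * 3"
        using E_Y2[OF n] E_S[of n] aseq_le[of n] n by (simp add: field_simps)
      then show ?thesis using n by (simp add: mult_le_cancel_left_pos)
    qed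
    have "(\<integral>\<omega>. (Zs (\<lambda>i. U i \<omega>) (Suc n))\<^sup>2 \<partial>M)
        = (\<integral>\<omega>. (?Z \<omega>)\<^sup>2 + 2 * (?Z \<omega> * ?Y \<omega>) - 2 * c * ?Z \<omega> + (?Y \<omega>)\<^sup>2 - 2 * c * ?Y \<omega> + c\<^sup>2 \<partial>M)"
      by (rule Bochner_Integration.integral_cong)
         (use n in \<open>auto simp: Zs_def c_def power2_eq_square algebra_simps\<close>)
    also have "\<dots> = (\<integral>\<omega>. (?Z \<omega>)\<^sup>2 \<partial>M) + 2 * (\<integral>\<omega>. ?Z \<omega> * ?Y \<omega> \<partial>M) - 2 * c * (\<integral>\<omega>. ?Z \<omega> \<partial>M)
          + (\<integral>\<omega>. (?Y \<omega>)\<^sup>2 \<partial>M) - 2 * c * (\<integral>\<omega>. ?Y \<omega> \<partial>M) + c\<^sup>2"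
      using iZ2 iZ iY iY2 iZY by (simp add: prob_space)
    also have "\<dots> = (\<integral>\<omega>. (?Z \<omega>)\<^sup>2 \<partial>M) + (\<integral>\<omega>. (?Y \<omega>)\<^sup>2 \<partial>M) - c\<^sup>2"
      unfolding ZY EY by (simp add: power2_eq_square)
    also have "\<dots> \<le> 3 * real n + 3" using Suc.IH EY2 zero_le_power2[of c] by linarith
    finally show ?thesis by simp
  qed
qed

end



lemma aseq_Suc_harm: "aseq (Suc n) = 3 * real n - 2 * harm n"
proof (induction n)
  case 0 then show ?case by (simp add: aseq_def harm_def)
next
  case (Suc n)
  have "aseq (Suc (Suc n)) = aseq (Suc n) + (2 * ((real (Suc n) - 1) / real (Suc n)) + 1)"
    unfolding aseq_def by simp
  also have "\<dots> = 3 * real (Suc n) - 2 * harm (Suc n)"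
    unfolding Suc.IH harm_Suc by (simp add: field_simps)
  finally show ?case .
qed

lemma aseq_lim: "(\<lambda>n. aseq n / real n) \<longlonglongrightarrow> 3"
proof -
  have h1: "(\<lambda>n. (harm n - ln (real n)) * inverse (real (Suc n))) \<longlonglongrightarrow> euler_mascheroni * 0"
    by (intro tendsto_mult euler_mascheroni_LIMSEQ LIMSEQ_inverse_real_of_nat)
  have h2: "(\<lambda>n. ln (real n) / real (Suc n)) \<longlonglongrightarrow> 0" by real_asymp
  have h3: "(\<lambda>n. 3 * real n / real (Suc n)) \<longlonglongrightarrow> 3" by real_asymp
  have "(\<lambda>n. 3 * real n / real (Suc n) - 2 * ((harm n - ln (real n)) * inverse (real (Suc n)) + ln (real n) / real (Suc n))) \<longlonglongrightarrow> 3 - 2 * (euler_mascheroni * 0 + 0)"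
    by (intro tendsto_intros h1 h2 h3)
  also have "(\<lambda>n. 3 * real n / real (Suc n) - 2 * ((harm n - ln (real n)) * inverse (real (Suc n)) + ln (real n) / real (Suc n)))
     = (\<lambda>n. aseq (Suc n) / real (Suc n))"
  proof (rule ext)
    fix n
    have p: "(harm n - ln (real n)) * inverse (real (Suc n)) + ln (real n) / real (Suc n) = harm n / real (Suc n)"
      by (simp add: divide_inverse algebra_simps)
    show "3 * real n / real (Suc n) - 2 * ((harm n - ln (real n)) * inverse (real (Suc n)) + ln (real n) / real (Suc n))
     = aseq (Suc n) / real (Suc n)"
      unfolding p by (simp add: aseq_Suc_harm diff_divide_distrib)
  qed
  finally have "(\<lambda>n. aseq (Suc n) / real (Suc n)) \<longlonglongrightarrow> 3" by simp
  then show ?thesis by (rule LIMSEQ_imp_Suc)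
qed

lemma floor_sqrt_at_top: "filterlim floor_sqrt at_top sequentially"
  unfolding filterlim_at_top
proof
  fix Z :: nat
  show "eventually (\<lambda>n. Z \<le> floor_sqrt n) sequentially"
    unfolding eventually_sequentially by (intro exI[of _ "Z^2"]) (auto intro: le_floor_sqrtI)
qed

lemma sq_cancel: "(x::real) \<noteq> 0 \<Longrightarrow> y \<noteq> 0 \<Longrightarrow> a / x^2 * (x / y)^2 = a / y^2"
  by (simp add: power_divide)

lemma sandwich_sq:
  fixes S :: "nat \<Rightarrow> real"
  assumes mono: "\<And>n. S n \<le> S (Suc n)" and nn: "\<And>n. S n \<ge> 0"
    and lim: "(\<lambda>m. S (m^2) / real (m^2)) \<longlonglongrightarrow> L"
  shows "(\<lambda>n. S n / real n) \<longlonglongrightarrow> L"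
proof -
  define g where "g m = S (m^2) / real (m^2)" for m
  have inc: "S a \<le> S b" if "a \<le> b" for a b
    using incseq_SucI[of S, OF mono] that unfolding incseq_def by blast
  define up where "up m = g (Suc m) * ((real m + 1) / real m)^2" for m
  define lo where "lo m = g m * (real m / (real m + 1))^2" for m
  have gS: "(\<lambda>m. g (Suc m)) \<longlonglongrightarrow> L" using lim unfolding g_def by (rule LIMSEQ_Suc)
  have r1: "(\<lambda>m. ((real m + 1) / real m)^2) \<longlonglongrightarrow> 1" by real_asymp
  have r2: "(\<lambda>m. (real m / (real m + 1))^2) \<longlonglongrightarrow> 1" by real_asymp
  have up_lim: "up \<longlonglongrightarrow> L" unfolding up_def using tendsto_mult[OF gS r1] by simp
  have lo_lim: "lo \<longlonglongrightarrow> L" unfolding lo_def using tendsto_mult[OF lim[folded g_def] r2] by simp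
  have U: "(\<lambda>n. up (floor_sqrt n)) \<longlonglongrightarrow> L" by (rule filterlim_compose[OF up_lim floor_sqrt_at_top])
  have Lo: "(\<lambda>n. lo (floor_sqrt n)) \<longlonglongrightarrow> L" by (rule filterlim_compose[OF lo_lim floor_sqrt_at_top])
  show ?thesis
  proof (rule tendsto_sandwich[OF _ _ Lo U])
    show "eventually (\<lambda>n. lo (floor_sqrt n) \<le> S n / real n) sequentially"
      unfolding eventually_sequentially
    proof (intro exI[of _ 1] allI impI)
      fix n :: nat assume n: "n \<ge> 1"
      define s where "s = floor_sqrt n"
      have s1: "s^2 \<le> n" and s2: "n < (Suc s)^2" unfolding s_def
        by (simp, rule Suc_floor_sqrt_power2_gt)
      have s0: "s \<ge> 1" using n unfolding s_def by (simp add: Suc_le_eq)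
      have "lo s = S (s^2) / (real s + 1)^2"
        unfolding lo_def g_def using s0 sq_cancel[of "real s" "real s + 1" "S (s^2)"] by simp
      also have "\<dots> \<le> S (s^2) / real n"
      proof (rule divide_left_mono[OF _ nn])
        have "real n < (real s + 1)^2" using s2 by (metis of_nat_Suc of_nat_less_iff of_nat_power add.commute)
        then show "real n \<le> (real s + 1)^2" by simp
        show "0 < (real s + 1)^2 * real n" using n by simp
      qed
      also have "\<dots> \<le> S n / real n" using inc[OF s1] n by (simp add: divide_right_mono)
      finally show "lo (floor_sqrt n) \<le> S n / real n" unfolding s_def .
    qed
    show "eventually (\<lambda>n. S n / real n \<le> up (floor_sqrt n)) sequentially"
      unfolding eventually_sequentially
    proof (intro exI[of _ 1] allI impI)
      fix n :: nat assume n: "n \<ge> 1"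
      define s where "s = floor_sqrt n"
      have s0: "s \<ge> 1" using n unfolding s_def by (simp add: Suc_le_eq)
      have s1: "s^2 \<le> n" and s2: "n < (Suc s)^2" unfolding s_def
        by (simp, rule Suc_floor_sqrt_power2_gt)
      have "S n / real n \<le> S ((Suc s)^2) / real n" using inc[OF less_imp_le[OF s2]] n by (simp add: divide_right_mono)
      also have "\<dots> \<le> S ((Suc s)^2) / real (s^2)"
      proof (rule divide_left_mono[OF _ nn])
        show "real (s^2) \<le> real n" using s1 by simp
        show "0 < real n * real (s^2)" using n s0 by simp
      qed
      also have "\<dots> = up s"
        unfolding up_def g_def using s0 sq_cancel[of "real s + 1" "real s" "S ((Suc s)^2)"]
        by (simp add: add.commute)
      finally show "S n / real n \<le> up (floor_sqrt n)" unfolding s_def .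
    qed
  qed
qed




lemma gen_cancel: "(x::real) \<noteq> 0 \<Longrightarrow> 3 * x / (e * x)\<^sup>2 = 3 / e\<^sup>2 * inverse x"
  by (simp add: power2_eq_square field_simps)

context rrt_good begin

lemma rv_Zs: "(\<lambda>\<omega>. Zs (\<lambda>i. U i \<omega>) n) \<in> borel_measurable M"
  using int_nice[OF nice_Zs[of n]] by (rule borel_measurable_integrable)

lemma Z_sub_lim:
  "AE \<omega> in M. (\<lambda>m. Zs (\<lambda>i. U i \<omega>) ((Suc m)^2) / real ((Suc m)^2)) \<longlonglongrightarrow> 0"
proof -
  have "AE \<omega> in M. eventually (\<lambda>m. \<bar>Zs (\<lambda>i. U i \<omega>) ((Suc m)^2) / real ((Suc m)^2)\<bar> < inverse (real (Suc r))) sequentially"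
    for r :: nat
  proof -
    define e :: real where "e = inverse (real (Suc r))"
    have e0: "e > 0" unfolding e_def by simp
    define A where "A m = {\<omega> \<in> space M. (e * real ((Suc m)^2))\<^sup>2 \<le> (Zs (\<lambda>i. U i \<omega>) ((Suc m)^2))\<^sup>2}" for m
    have Asets: "A m \<in> sets M" for m
      unfolding A_def using rv_Zs by measurable
    have Abound: "measure M (A m) \<le> 3 / e\<^sup>2 * inverse (real (Suc m) ^ 2)" for m
    proof -
      let ?n = "(Suc m)^2"
      have "measure M (A m) \<le> (\<integral>\<omega>. (Zs (\<lambda>i. U i \<omega>) ?n)\<^sup>2 \<partial>M) / (e * real ?n)\<^sup>2"
        unfolding A_def
        by (rule integral_Markov_inequality_measure[where A="space M"])
           (use e0 int_nice[OF nice_power2[OF nice_Zs]] in auto)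
      also have "\<dots> \<le> 3 * real ?n / (e * real ?n)\<^sup>2"
        by (rule divide_right_mono[OF E_Z2]) simp
      also have "\<dots> = 3 / e\<^sup>2 * inverse (real (Suc m) ^ 2)"
        using gen_cancel[of "real (Suc m) ^ 2" e] by (simp only: of_nat_power) simp
      finally show ?thesis .
    qed
    have summ: "summable (\<lambda>m. measure M (A m))"
    proof (rule summable_comparison_test[OF _ summable_mult[OF summable_Suc_iff[THEN iffD2, OF inverse_power_summable[of 2]]]])
      show "\<exists>N. \<forall>m\<ge>N. norm (measure M (A m)) \<le> 3 / e\<^sup>2 * inverse (real (Suc m) ^ 2)"
        using Abound by auto
    qed simp
    have "AE \<omega> in M. eventually (\<lambda>m. \<omega> \<in> space M - A m) sequentially"
      by (rule borel_cantelli_AE1[OF Asets _ summ]) (simp add: emeasure_finite less_top[symmetric])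
    then show ?thesis
    proof (rule AE_mp[OF _ AE_I2], intro impI)
      fix \<omega> assume "\<omega> \<in> space M" and ev: "eventually (\<lambda>m. \<omega> \<in> space M - A m) sequentially"
      show "eventually (\<lambda>m. \<bar>Zs (\<lambda>i. U i \<omega>) ((Suc m)^2) / real ((Suc m)^2)\<bar> < inverse (real (Suc r))) sequentially"
        using ev
      proof (rule eventually_mono)
        fix m assume "\<omega> \<in> space M - A m"
        then have "(Zs (\<lambda>i. U i \<omega>) ((Suc m)^2))\<^sup>2 < (e * real ((Suc m)^2))\<^sup>2"
          unfolding A_def using \<open>\<omega> \<in> space M\<close> by auto
        then have "\<bar>Zs (\<lambda>i. U i \<omega>) ((Suc m)^2)\<bar> < e * real ((Suc m)^2)"
          using e0 power_less_imp_less_base[of "\<bar>Zs (\<lambda>i. U i \<omega>) ((Suc m)^2)\<bar>" 2 "e * real ((Suc m)^2)"]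
          by simp
        then show "\<bar>Zs (\<lambda>i. U i \<omega>) ((Suc m)^2) / real ((Suc m)^2)\<bar> < inverse (real (Suc r))"
          unfolding e_def by (simp add: divide_less_eq)
      qed
    qed
  qed
  then have "AE \<omega> in M. \<forall>r. eventually (\<lambda>m. \<bar>Zs (\<lambda>i. U i \<omega>) ((Suc m)^2) / real ((Suc m)^2)\<bar> < inverse (real (Suc r))) sequentially"
    by (simp add: AE_all_countable)
  then show ?thesis
  proof (rule AE_mp[OF _ AE_I2], intro impI)
    fix \<omega> assume all: "\<forall>r. eventually (\<lambda>m. \<bar>Zs (\<lambda>i. U i \<omega>) ((Suc m)^2) / real ((Suc m)^2)\<bar> < inverse (real (Suc r))) sequentially"
    show "(\<lambda>m. Zs (\<lambda>i. U i \<omega>) ((Suc m)^2) / real ((Suc m)^2)) \<longlonglongrightarrow> 0"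
    proof (rule tendstoI)
      fix d :: real assume "d > 0"
      then obtain r where r: "inverse (real (Suc r)) < d" using reals_Archimedean by blast
      show "eventually (\<lambda>m. dist (Zs (\<lambda>i. U i \<omega>) ((Suc m)^2) / real ((Suc m)^2)) 0 < d) sequentially"
        using all[rule_format, of r] by (rule eventually_mono) (use r in auto)
    qed
  qed
qed

lemma sq_at_top: "filterlim (\<lambda>m::nat. (Suc m)^2) at_top sequentially"
  unfolding filterlim_at_top
proof
  fix Z :: nat
  show "eventually (\<lambda>m. Z \<le> (Suc m)^2) sequentially"
    unfolding eventually_sequentially
  proof (intro exI[of _ Z] allI impI)
    fix m assume "Z \<le> m"
    also have "m \<le> (Suc m)^2" by (simp add: power2_eq_square)
    finally show "Z \<le> (Suc m)^2" .
  qed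
qed

lemma split_div: "(S::real) = a + 2 * z \<Longrightarrow> a / x + 2 * (z / x) = S / x"
  by (simp add: add_divide_distrib)

lemma T_AE: "AE \<omega> in M. (\<lambda>n. Tstat (\<lambda>i. U i \<omega>) n) \<longlonglongrightarrow> 3"
  using Z_sub_lim
proof (rule AE_mp[OF _ AE_I2], intro impI)
  fix \<omega> assume Zl: "(\<lambda>m. Zs (\<lambda>i. U i \<omega>) ((Suc m)^2) / real ((Suc m)^2)) \<longlonglongrightarrow> 0"
  let ?S = "Ssum (\<lambda>i. U i \<omega>)"
  have al: "(\<lambda>m. aseq ((Suc m)^2) / real ((Suc m)^2)) \<longlonglongrightarrow> 3"
    by (rule filterlim_compose[OF aseq_lim sq_at_top])
  have "(\<lambda>m. aseq ((Suc m)^2) / real ((Suc m)^2) + 2 * (Zs (\<lambda>i. U i \<omega>) ((Suc m)^2) / real ((Suc m)^2))) \<longlonglongrightarrow> 3 + 2 * 0"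
    by (intro tendsto_intros al Zl)
  also have "(\<lambda>m. aseq ((Suc m)^2) / real ((Suc m)^2) + 2 * (Zs (\<lambda>i. U i \<omega>) ((Suc m)^2) / real ((Suc m)^2)))
      = (\<lambda>m. ?S ((Suc m)^2) / real ((Suc m)^2))"
    by (rule ext, rule split_div[OF Ssum_decomp[OF goodU]])
  finally have "(\<lambda>m. ?S ((Suc m)^2) / real ((Suc m)^2)) \<longlonglongrightarrow> 3" by simp
  then have "(\<lambda>m. ?S (m^2) / real (m^2)) \<longlonglongrightarrow> 3"
    by (rule LIMSEQ_imp_Suc)
  then have "(\<lambda>n. ?S n / real n) \<longlonglongrightarrow> 3"
    by (rule sandwich_sq[where S="?S", OF Ssum_mono_Suc[OF goodU] Ssum_nonneg])
  then show "(\<lambda>n. Tstat (\<lambda>i. U i \<omega>) n) \<longlonglongrightarrow> 3"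
    by (simp add: Tstat_Ssum)
qed

lemma nice_T: "nice (\<lambda>u. Tstat u n) n"
proof -
  have eq: "(\<lambda>u. Tstat u n) = (\<lambda>u. Ssum u n * (1 / real n))"
    by (simp add: Tstat_Ssum fun_eq_iff)
  show ?thesis unfolding eq by (rule nice_mult[OF nice_Ssum nice_const])
qed

lemma T_int: "integrable M (\<lambda>\<omega>. Tstat (\<lambda>i. U i \<omega>) n)"
  by (rule int_nice[OF nice_T])

lemma abs_le_sq: "2 * \<bar>z\<bar> * sqrt x \<le> z\<^sup>2 + (x::real)" if "x \<ge> 0" for z
proof -
  have "0 \<le> (\<bar>z\<bar> - sqrt x)\<^sup>2" by simp
  also have "\<dots> = z\<^sup>2 - 2 * \<bar>z\<bar> * sqrt x + x" using that by (simp add: power2_diff)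
  finally show ?thesis by linarith
qed

lemma tri_gen: "(n::real) > 0 \<Longrightarrow> \<bar>a + 2 * z / n\<bar> \<le> \<bar>a\<bar> + 2 * \<bar>z\<bar> / n"
proof -
  assume n: "n > 0"
  have "\<bar>2 * z / n\<bar> = 2 * \<bar>z\<bar> / n" using n by (simp add: abs_mult abs_divide)
  then show ?thesis using abs_triangle_ineq[of a "2 * z / n"] by linarith
qed

lemma int_gen:
  assumes "integrable M f"
  shows "(\<integral>\<omega>. c + (f \<omega> + d) / q \<partial>M) = c + ((\<integral>\<omega>. f \<omega> \<partial>M) + d) / (q::real)"
proof -
  have i1: "integrable M (\<lambda>\<omega>. f \<omega> + d)" using assms by simp
  have "(\<integral>\<omega>. c + (f \<omega> + d) / q \<partial>M) = (\<integral>\<omega>. c \<partial>M) + (\<integral>\<omega>. (f \<omega> + d) / q \<partial>M)"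
    by (rule Bochner_Integration.integral_add) (use i1 in auto)
  also have "(\<integral>\<omega>. (f \<omega> + d) / q \<partial>M) = (\<integral>\<omega>. f \<omega> + d \<partial>M) / q"
    by (rule integral_divide_zero)
  also have "(\<integral>\<omega>. f \<omega> + d \<partial>M) = (\<integral>\<omega>. f \<omega> \<partial>M) + (\<integral>\<omega>. d \<partial>M)"
    by (rule Bochner_Integration.integral_add) (use assms in auto)
  finally show ?thesis by (simp add: prob_space)
qed

lemma T_L1: "(\<lambda>n. \<integral>\<omega>. \<bar>Tstat (\<lambda>i. U i \<omega>) n - 3\<bar> \<partial>M) \<longlonglongrightarrow> 0"
proof (rule tendsto_sandwich[where f="\<lambda>_. 0" and h="\<lambda>n. \<bar>aseq n / real n - 3\<bar> + 4 / sqrt (real n)"])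
  show "eventually (\<lambda>n. 0 \<le> (\<integral>\<omega>. \<bar>Tstat (\<lambda>i. U i \<omega>) n - 3\<bar> \<partial>M)) sequentially"
    by (simp add: integral_nonneg_AE)
  show "(\<lambda>n. 0::real) \<longlonglongrightarrow> 0" by simp
  have l1: "(\<lambda>n. \<bar>aseq n / real n - 3\<bar>) \<longlonglongrightarrow> \<bar>3 - 3\<bar>"
    by (rule tendsto_rabs[OF tendsto_diff[OF aseq_lim tendsto_const]])
  have l2: "(\<lambda>n. 4 / sqrt (real n)) \<longlonglongrightarrow> 0" by real_asymp
  show "(\<lambda>n. \<bar>aseq n / real n - 3\<bar> + 4 / sqrt (real n)) \<longlonglongrightarrow> 0"
    using tendsto_add[OF l1 l2] by simp
  show "eventually (\<lambda>n. (\<integral>\<omega>. \<bar>Tstat (\<lambda>i. U i \<omega>) n - 3\<bar> \<partial>M) \<le> \<bar>aseq n / real n - 3\<bar> + 4 / sqrt (real n)) sequentially"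
    unfolding eventually_sequentially
  proof (intro exI[of _ 1] allI impI)
    fix n :: nat assume n: "n \<ge> 1"
    define c where "c = \<bar>aseq n / real n - 3\<bar>"
    define q where "q = real n * sqrt (real n)"
    have q0: "q > 0" unfolding q_def using n by simp
    let ?Z = "\<lambda>\<omega>. Zs (\<lambda>i. U i \<omega>) n"
    have iZ2: "integrable M (\<lambda>\<omega>. (?Z \<omega>)\<^sup>2)" by (rule int_nice[OF nice_power2[OF nice_Zs]])
    have "(\<integral>\<omega>. \<bar>Tstat (\<lambda>i. U i \<omega>) n - 3\<bar> \<partial>M) \<le> (\<integral>\<omega>. c + ((?Z \<omega>)\<^sup>2 + real n) / q \<partial>M)"
    proof (rule integral_mono)
      show "integrable M (\<lambda>\<omega>. \<bar>Tstat (\<lambda>i. U i \<omega>) n - 3\<bar>)"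
        using T_int by auto
      show "integrable M (\<lambda>\<omega>. c + ((?Z \<omega>)\<^sup>2 + real n) / q)"
        by (intro Bochner_Integration.integrable_add integrable_const integrable_divide iZ2)
      fix \<omega> assume "\<omega> \<in> space M"
      have T: "Tstat (\<lambda>i. U i \<omega>) n - 3 = (aseq n / real n - 3) + 2 * ?Z \<omega> / real n"
        by (simp add: Tstat_Ssum Ssum_decomp[OF goodU] add_divide_distrib)
      have "2 * \<bar>?Z \<omega>\<bar> / real n \<le> ((?Z \<omega>)\<^sup>2 + real n) / q"
      proof -
        have "2 * \<bar>?Z \<omega>\<bar> * sqrt (real n) \<le> (?Z \<omega>)\<^sup>2 + real n" by (rule abs_le_sq) simp
        moreover have "2 * \<bar>?Z \<omega>\<bar> / real n = (2 * \<bar>?Z \<omega>\<bar> * sqrt (real n)) / q"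
          unfolding q_def using n by simp
        ultimately show ?thesis using q0 by (simp add: divide_right_mono)
      qed
      moreover have "\<bar>Tstat (\<lambda>i. U i \<omega>) n - 3\<bar> \<le> c + 2 * \<bar>?Z \<omega>\<bar> / real n"
        unfolding T c_def by (rule tri_gen) (use n in simp)
      ultimately show "\<bar>Tstat (\<lambda>i. U i \<omega>) n - 3\<bar> \<le> c + ((?Z \<omega>)\<^sup>2 + real n) / q" by linarith
    qed
    also have "\<dots> = c + ((\<integral>\<omega>. (?Z \<omega>)\<^sup>2 \<partial>M) + real n) / q"
      by (rule int_gen[OF iZ2])
    also have "\<dots> \<le> c + (3 * real n + real n) / q"
      using E_Z2[of n] q0 by (simp add: divide_right_mono)
    also have "(3 * real n + real n) / q = 4 / sqrt (real n)"
    proof -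
      have "(3 * real n + real n) / q = (4 * real n) / (real n * sqrt (real n))" unfolding q_def by simp
      also have "\<dots> = 4 / sqrt (real n)" using n by simp
      finally show ?thesis .
    qed
    finally show "(\<integral>\<omega>. \<bar>Tstat (\<lambda>i. U i \<omega>) n - 3\<bar> \<partial>M) \<le> \<bar>aseq n / real n - 3\<bar> + 4 / sqrt (real n)"
      unfolding c_def .
  qed
qed

end



lemma nice_Tstat: "nice (\<lambda>u. Tstat u n) n"
proof -
  have eq: "(\<lambda>u. Tstat u n) = (\<lambda>u. Ssum u n * (1 / real n))"
    by (simp add: Tstat_Ssum fun_eq_iff)
  show ?thesis unfolding eq by (rule nice_mult[OF nice_Ssum nice_const])
qed

lemma Tstat_cong:
  assumes "\<And>j. j \<ge> 1 \<Longrightarrow> u j = v j"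
  shows "Tstat u n = Tstat v n"
proof -
  have "outdeg u n k = outdeg v n k" if "k \<in> {1..n}" for k
  proof -
    have "{j \<in> {k..<n}. u j = k} = {j \<in> {k..<n}. v j = k}" using that assms by auto
    then show ?thesis unfolding outdeg_def by simp
  qed
  then show ?thesis unfolding Tstat_def by (intro arg_cong2[where f="(*)"] refl sum.cong) auto
qed

theorem lemma2p4:
  fixes M :: "'a measure" and U :: "nat \<Rightarrow> 'a \<Rightarrow> nat"
  assumes "prob_space M"
    and "prob_space.indep_vars M (\<lambda>_. count_space UNIV) U {1..}"
    and "\<And>j. j \<ge> 1 \<Longrightarrow> distr M (count_space UNIV) (U j) = measure_pmf (pmf_of_set {1..j})"
  shows "(AE \<omega> in M. (\<lambda>n. Tstat (\<lambda>j. U j \<omega>) n) \<longlonglongrightarrow> 3)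
    \<and> (\<forall>n. integrable M (\<lambda>\<omega>. Tstat (\<lambda>j. U j \<omega>) n))
    \<and> ((\<lambda>n. LINT \<omega>|M. \<bar>Tstat (\<lambda>j. U j \<omega>) n - 3\<bar>) \<longlonglongrightarrow> 0)"
proof -
  interpret R: rrt M U
    using assms by (simp add: rrt_def rrt_axioms_def)
  define U' where "U' j \<omega> = (if U j \<omega> \<in> {1..j} then U j \<omega> else 1)" for j \<omega>
  have AEj: "AE \<omega> in M. U j \<omega> \<in> {1..j}" if j: "j \<ge> 1" for j
  proof -
    have "AE x in distr M (count_space UNIV) (U j). x \<in> {1..j}"
      unfolding assms(3)[OF j] using j by (simp add: AE_measure_pmf_iff)
    then show ?thesis by (rule AE_distrD[OF R.meas_U[OF j]])
  qed
  have AEall: "AE \<omega> in M. \<forall>j. j \<ge> 1 \<longrightarrow> U j \<omega> \<in> {1..j}"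
    unfolding AE_all_countable using AEj by auto
  have R': "rrt_good M U'"
  proof (unfold_locales)
    have "prob_space.indep_vars M (\<lambda>_. count_space UNIV) (\<lambda>j \<omega>. (\<lambda>x. if x \<in> {1..j} then x else 1) (U j \<omega>)) {1..}"
      by (rule R.indep_vars_compose2[OF assms(2)]) simp
    then show "prob_space.indep_vars M (\<lambda>_. count_space UNIV) U' {1..}"
      unfolding U'_def by simp
  next
    fix j :: nat assume j: "j \<ge> 1"
    have "distr M (count_space UNIV) (U' j) = distr M (count_space UNIV) (U j)"
    proof (rule distr_cong_AE)
      show "AE x in M. U' j x = U j x" using AEj[OF j] by eventually_elim (simp add: U'_def)
      have "U' j = (\<lambda>\<omega>. (\<lambda>x. if x \<in> {1..j} then x else 1) (U j \<omega>))"
        by (simp add: fun_eq_iff U'_def)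
      then show "U' j \<in> measurable M (count_space UNIV)"
        using measurable_compose[OF R.meas_U[OF j] measurable_count_space] by simp
      show "U j \<in> measurable M (count_space UNIV)" by (rule R.meas_U[OF j])
    qed simp_all
    then show "distr M (count_space UNIV) (U' j) = measure_pmf (pmf_of_set {1..j})"
      using assms(3)[OF j] by simp
  next
    fix \<omega> show "good (\<lambda>j. U' j \<omega>)" unfolding good_def U'_def by auto
  qed
  interpret R': rrt_good M U' by (rule R')
  have AEeq: "AE \<omega> in M. \<forall>n. Tstat (\<lambda>j. U j \<omega>) n = Tstat (\<lambda>j. U' j \<omega>) n"
    using AEall by eventually_elim (auto intro!: Tstat_cong simp: U'_def)
  have c1: "AE \<omega> in M. (\<lambda>n. Tstat (\<lambda>j. U j \<omega>) n) \<longlonglongrightarrow> 3"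
    using AEeq R'.T_AE by eventually_elim simp
  have c2: "integrable M (\<lambda>\<omega>. Tstat (\<lambda>j. U j \<omega>) n)" for n
    by (rule R.int_nice[OF nice_Tstat])
  have c3: "(LINT \<omega>|M. \<bar>Tstat (\<lambda>j. U j \<omega>) n - 3\<bar>) = (LINT \<omega>|M. \<bar>Tstat (\<lambda>j. U' j \<omega>) n - 3\<bar>)" for n
  proof (rule integral_cong_AE)
    show "(\<lambda>\<omega>. \<bar>Tstat (\<lambda>j. U j \<omega>) n - 3\<bar>) \<in> borel_measurable M"
      using c2[of n] by measurable
    show "(\<lambda>\<omega>. \<bar>Tstat (\<lambda>j. U' j \<omega>) n - 3\<bar>) \<in> borel_measurable M"
      using R'.T_int[of n] by measurable
    show "AE \<omega> in M. \<bar>Tstat (\<lambda>j. U j \<omega>) n - 3\<bar> = \<bar>Tstat (\<lambda>j. U' j \<omega>) n - 3\<bar>"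
      using AEeq by eventually_elim simp
  qed
  show ?thesis using c1 c2 R'.T_L1 unfolding c3 by simp
qed



end
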